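(* Let $X$ be a metric space, $1\le p<\infty$, $c>0$, and assume $0<\epsilon_{X;p}(S)<\infty$ for all $S\ge c$. Let $f\colon[c,\infty)\to[0,\infty)$ be non-decreasing with $$\int_c^\infty\epsilon_{X;p}(S)^p\,d\big(f(S)^p\big)<\infty .$$ Then there exist a Borel measure $\mu$ on $[c,\infty)$, a Lipschitz map $\theta\colon X\to L^p([c,\infty),\mu;\ell^p(X))$ and a non-decreasing function $\rho$ with $\rho\succeq f$ such that $\|\theta(x)-\theta(y)\|_p\ge\rho(d(x,y))$ for all $x,y\in X$.
   Context: For a metric space $(X,d)$ and $1\le p<\infty$, $\ell^p(X)$ is the space of $p$-summable real functions on $X$ and $\ell^p_1(X)$ its unit sphere. For a map $\xi\colon X\to\ell^p(X)$, written $x\mapsto\xi_x$, put $S(\xi)=\sup\{d(x,y):\xi_x(y)\neq0\}$ and $\varepsilon(\xi;p)=\sup_{x\ne y}\|\xi_x-\xi_y\|_p/d(x,y)$. The profile is $\epsilon_{X;p}(S)=\inf\{\varepsilon(\xi;p):\xi\colon X\to\ell^p_1(X),\ S(\xi)\le S\}$. For non-negative monotone functions $f,g$, $f\succeq g$ means there are constants $C,D>0$ with $f(t)\ge Cg(Dt)$ for all sufficiently large $t$. The integral is a Lebesgue–Stieltjes integral with respect to $f^p$. *)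

theory Defs
  imports "HOL-Analysis.Analysis"
begin

definition lp_member :: "real \<Rightarrow> ('a \<Rightarrow> real) \<Rightarrow> bool" where
  "lp_member p f \<longleftrightarrow> (\<lambda>y. \<bar>f y\<bar> powr p) summable_on UNIV"

definition lp_norm :: "real \<Rightarrow> ('a \<Rightarrow> real) \<Rightarrow> real" where
  "lp_norm p f = (infsum (\<lambda>y. \<bar>f y\<bar> powr p) UNIV) powr (1 / p)"

definition prop_size :: "('a::metric_space \<Rightarrow> 'a \<Rightarrow> real) \<Rightarrow> ereal" where
  "prop_size \<xi> = (SUP xy \<in> {(x, y). \<xi> x y \<noteq> 0}. ereal (dist (fst xy) (snd xy)))"

definition eps_map :: "real \<Rightarrow> ('a::metric_space \<Rightarrow> 'a \<Rightarrow> real) \<Rightarrow> ereal" where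
  "eps_map p \<xi> = (SUP xy \<in> {(x, y). x \<noteq> y}.
      ereal (lp_norm p (\<xi> (fst xy) - \<xi> (snd xy)) / dist (fst xy) (snd xy)))"

definition profile :: "'a::metric_space itself \<Rightarrow> real \<Rightarrow> real \<Rightarrow> ereal" where
  "profile _ p S = (INF \<xi> \<in> {\<xi> :: 'a \<Rightarrow> 'a \<Rightarrow> real.
        (\<forall>x. lp_member p (\<xi> x) \<and> lp_norm p (\<xi> x) = 1) \<and> prop_size \<xi> \<le> ereal S}.
      eps_map p \<xi>)"

definition succeq_fun :: "(real \<Rightarrow> real) \<Rightarrow> (real \<Rightarrow> real) \<Rightarrow> bool" where
  "succeq_fun f g \<longleftrightarrow> (\<exists>C>0. \<exists>D>0. eventually (\<lambda>t. f t \<ge> C * g (D * t)) at_top)"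

text \<open>Right-continuous normalisation of the non-decreasing function S \<mapsto> f(S)^p on [c,\<infinity>),
  extended by the constant f(c)^p to the left of c (so the measure lives on [c,\<infinity>),
  with an atom f(c+)^p - f(c)^p at c).\<close>
definition LS_fun :: "(real \<Rightarrow> real) \<Rightarrow> real \<Rightarrow> real \<Rightarrow> real \<Rightarrow> real" where
  "LS_fun f p c t = (INF s \<in> {s. t < s \<and> c \<le> s}. f s powr p)"

definition lp_simple :: "real measure \<Rightarrow> real \<Rightarrow> (real \<Rightarrow> 'a \<Rightarrow> real) \<Rightarrow> bool" where
  "lp_simple \<mu> p s \<longleftrightarrow> finite (s ` space \<mu>) \<and>
     (\<forall>v \<in> s ` space \<mu>. s -` {v} \<inter> space \<mu> \<in> sets \<mu>) \<and>
     (\<forall>t \<in> space \<mu>. lp_member p (s t))"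

definition lp_strongly_measurable :: "real measure \<Rightarrow> real \<Rightarrow> (real \<Rightarrow> 'a \<Rightarrow> real) \<Rightarrow> bool" where
  "lp_strongly_measurable \<mu> p g \<longleftrightarrow> (\<forall>t \<in> space \<mu>. lp_member p (g t)) \<and>
     (\<exists>s :: nat \<Rightarrow> real \<Rightarrow> 'a \<Rightarrow> real. (\<forall>n. lp_simple \<mu> p (s n)) \<and>
        (AE t in \<mu>. (\<lambda>n. lp_norm p (s n t - g t)) \<longlonglongrightarrow> 0))"

definition Lp_lp :: "real measure \<Rightarrow> real \<Rightarrow> (real \<Rightarrow> 'a \<Rightarrow> real) \<Rightarrow> bool" where
  "Lp_lp \<mu> p g \<longleftrightarrow> lp_strongly_measurable \<mu> p g \<and>
     (\<integral>\<^sup>+ t. ennreal (lp_norm p (g t) powr p) \<partial>\<mu>) < \<infinity>"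

definition Lp_lp_norm :: "real measure \<Rightarrow> real \<Rightarrow> (real \<Rightarrow> 'a \<Rightarrow> real) \<Rightarrow> real" where
  "Lp_lp_norm \<mu> p g = (enn2real (\<integral>\<^sup>+ t. ennreal (lp_norm p (g t) powr p) \<partial>\<mu>)) powr (1 / p)"

end

theory Submission
  imports Defs
begin

lemma lp_member_zero: "lp_member p (\<lambda>_. 0::real)"
  by (simp add: lp_member_def)

lemma lp_norm_zero: "lp_norm p (\<lambda>_. 0::real) = 0"
  by (simp add: lp_norm_def)

lemma lp_norm_nonneg: "0 \<le> lp_norm p g"
  by (simp add: lp_norm_def)

lemma abs_diff_powr_le:
  fixes a b p :: real assumes "0 < p"
  shows "\<bar>a - b\<bar> powr p \<le> 2 powr p * (\<bar>a\<bar> powr p + \<bar>b\<bar> powr p)"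
proof -
  have "\<bar>a - b\<bar> \<le> 2 * max \<bar>a\<bar> \<bar>b\<bar>" by auto
  then have "\<bar>a - b\<bar> powr p \<le> (2 * max \<bar>a\<bar> \<bar>b\<bar>) powr p"
    using assms by (intro powr_mono2) auto
  also have "\<dots> = 2 powr p * max \<bar>a\<bar> \<bar>b\<bar> powr p"
    by (simp add: powr_mult)
  also have "max \<bar>a\<bar> \<bar>b\<bar> powr p \<le> \<bar>a\<bar> powr p + \<bar>b\<bar> powr p"
    by (cases "\<bar>a\<bar> \<le> \<bar>b\<bar>") (auto simp: max_def)
  finally show ?thesis by (simp add: mult_left_mono)
qed

lemma lp_member_diff:
  assumes "0 < p" "lp_member p a" "lp_member p b"
  shows "lp_member p (a - b)"
proof -
  have "(\<lambda>y. 2 powr p * (\<bar>a y\<bar> powr p + \<bar>b y\<bar> powr p)) summable_on UNIV"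
    using assms by (intro summable_on_cmult_right summable_on_add) (auto simp: lp_member_def)
  then show ?thesis unfolding lp_member_def
    by (rule summable_on_comparison_test) (use abs_diff_powr_le[OF assms(1)] in auto)
qed

lemma lp_norm_powr:
  assumes "0 < p" shows "lp_norm p g powr p = infsum (\<lambda>y. \<bar>g y\<bar> powr p) UNIV"
proof -
  have "0 \<le> infsum (\<lambda>y. \<bar>g y\<bar> powr p) UNIV" by (intro infsum_nonneg) auto
  then show ?thesis using assms by (simp add: lp_norm_def powr_powr)
qed

lemma lp_norm_disjoint:
  assumes "0 < p" "lp_member p a" "lp_member p b" "lp_norm p a = 1" "lp_norm p b = 1"
    and "\<And>z. a z = 0 \<or> b z = 0"
  shows "lp_norm p (a - b) powr p = 2"
proof -
  have a1: "infsum (\<lambda>y. \<bar>a y\<bar> powr p) UNIV = 1"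
    using lp_norm_powr[OF assms(1), of a] assms(4) by simp
  have b1: "infsum (\<lambda>y. \<bar>b y\<bar> powr p) UNIV = 1"
    using lp_norm_powr[OF assms(1), of b] assms(5) by simp
  have eq: "(\<lambda>y. \<bar>(a - b) y\<bar> powr p) = (\<lambda>y. \<bar>a y\<bar> powr p + \<bar>b y\<bar> powr p)"
  proof
    fix z show "\<bar>(a - b) z\<bar> powr p = \<bar>a z\<bar> powr p + \<bar>b z\<bar> powr p"
      using assms(6)[of z] by auto
  qed
  show ?thesis unfolding lp_norm_powr[OF assms(1)] eq
    using assms(2,3) a1 b1 by (subst infsum_add) (auto simp: lp_member_def)
qed

lemma LS_nonneg: "0 \<le> LS_fun f p c t"
  unfolding LS_fun_def by (rule cINF_greatest) (auto intro: gt_ex[of "max t c"] simp: less_max_iff_disj, meson gt_ex le_less_trans less_le max.cobounded1 max.cobounded2)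


lemma LS_ne: "{s. t < s \<and> c \<le> s} \<noteq> ({}::real set)"
proof -
  have "max t c + 1 \<in> {s. t < s \<and> c \<le> s}" by auto
  then show ?thesis by blast
qed

lemma LS_bdd: "bdd_below ((\<lambda>s. (f::real\<Rightarrow>real) s powr p) ` {s. t < s \<and> c \<le> (s::real)})"
  by (rule bdd_belowI[of _ 0]) auto

lemma LS_mono: "x \<le> y \<Longrightarrow> LS_fun f p c x \<le> LS_fun f p c y"
  unfolding LS_fun_def
  by (rule cINF_superset_mono[OF LS_ne LS_bdd]) auto

lemma LS_ge:
  assumes "mono_on {c..} f" "\<And>S. c \<le> S \<Longrightarrow> 0 \<le> f S" "c \<le> s" "0 < p"
  shows "f s powr p \<le> LS_fun f p c s"
  unfolding LS_fun_def
proof (rule cINF_greatest[OF LS_ne])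
  fix x assume "x \<in> {x. s < x \<and> c \<le> x}"
  then have "f s \<le> f x" using assms(1,3) by (auto simp: mono_on_def)
  then show "f s powr p \<le> f x powr p" using assms by (intro powr_mono2) auto
qed

lemma LS_rcont: "continuous (at_right a) (LS_fun f p c)"
proof -
  have "\<exists>\<delta>>0. LS_fun f p c (a + \<delta>) - LS_fun f p c a < e" if e: "e > 0" for e
  proof -
    have "(INF s \<in> {s. a < s \<and> c \<le> s}. f s powr p) < LS_fun f p c a + e"
      using e by (simp add: LS_fun_def)
    then obtain s0 where s0: "a < s0" "c \<le> s0" "f s0 powr p < LS_fun f p c a + e"
      by (subst (asm) cINF_less_iff[OF LS_ne LS_bdd]) auto
    have "LS_fun f p c (a + (s0 - a)/2) \<le> f s0 powr p"
      unfolding LS_fun_def by (rule cINF_lower[OF LS_bdd]) (use s0 in \<open>auto simp: field_simps\<close>)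
    then show ?thesis using s0 by (intro exI[of _ "(s0 - a)/2"]) auto
  qed
  then show ?thesis
    by (subst continuous_at_right_real_increasing) (auto intro: LS_mono)
qed

lemma LS_Ioc:
  assumes "a \<le> b"
  shows "emeasure (interval_measure (LS_fun f p c)) {a<..b} = ennreal (LS_fun f p c b - LS_fun f p c a)"
  by (rule emeasure_interval_measure_Ioc[OF assms LS_mono LS_rcont])

lemma profile_antimono:
  assumes "S \<le> S'" shows "profile TYPE('a::metric_space) p S' \<le> profile TYPE('a) p S"
  unfolding profile_def
  by (rule INF_superset_mono) (use assms order_trans in \<open>auto intro: order_trans\<close>)


definition sq :: "real \<Rightarrow> nat \<Rightarrow> real" where "sq c k = c * real (Suc k)"

definition mu :: "real \<Rightarrow> (nat \<Rightarrow> real) \<Rightarrow> real measure" where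
  "mu c m = distr (density (count_space UNIV) (\<lambda>k. ennreal (m k))) (restrict_space borel {c..}) (sq c)"

lemma sets_mu: "sets (mu c m) = sets (restrict_space borel {c..})"
  by (simp add: mu_def)

lemma space_mu: "space (mu c m) = {c..}"
  by (simp add: mu_def space_restrict_space)

lemma sq_ge: "0 < c \<Longrightarrow> c \<le> sq c k"
  by (simp add: sq_def)

lemma sq_inj: "0 < c \<Longrightarrow> inj (sq c)"
  by (auto simp: inj_def sq_def)

lemma sq_meas: "0 < c \<Longrightarrow> sq c \<in> measurable (density (count_space UNIV) w) (restrict_space borel {c..})"
  by (subst measurable_cong_sets[OF sets_density refl])
     (auto intro!: measurable_restrict_space2 simp: sq_ge)

lemma disc_meas:
  assumes c: "0 < c" and z: "z \<in> space N" and h: "\<And>t. h t \<in> space N"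
    and off: "\<And>t. t \<notin> range (sq c) \<Longrightarrow> h t = z"
  shows "h \<in> measurable (restrict_space borel {c..}) N"
proof (rule measurable_discrete_difference[where f="\<lambda>_. z" and X="range (sq c)"])
  show "(\<lambda>_. z) \<in> measurable (restrict_space borel {c..}) N" using z by simp
  show "countable (range (sq c))" by simp
  fix x assume "x \<in> range (sq c)"
  then have "x \<in> {c..}" using sq_ge[OF c] by auto
  then show "{x} \<in> sets (restrict_space borel {c..})"
    by (subst sets_restrict_space_iff) auto
qed (use h off in auto)

lemma nn_integral_mu:
  assumes c: "0 < c" and off: "\<And>t. t \<notin> range (sq c) \<Longrightarrow> H t = 0"
  shows "(\<integral>\<^sup>+ t. H t \<partial>mu c m) = (\<Sum>k. ennreal (m k) * H (sq c k))"
proof -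
  have Hm: "H \<in> borel_measurable (restrict_space borel {c..})"
    by (rule disc_meas[OF c, of 0]) (use off in auto)
  have "(\<integral>\<^sup>+ t. H t \<partial>mu c m) = (\<integral>\<^sup>+ k. H (sq c k) \<partial>density (count_space UNIV) (\<lambda>k. ennreal (m k)))"
    unfolding mu_def
    by (rule nn_integral_distr[OF sq_meas[OF c]]) (use Hm in \<open>simp cong: measurable_cong_sets\<close>)
  also have "\<dots> = (\<integral>\<^sup>+ k. ennreal (m k) * H (sq c k) \<partial>count_space UNIV)"
    by (subst nn_integral_density) auto
  also have "\<dots> = (\<Sum>k. ennreal (m k) * H (sq c k))"
    by (rule nn_integral_count_space_nat)
  finally show ?thesis .
qed


lemma sq_mono: "0 < c \<Longrightarrow> j \<le> k \<Longrightarrow> sq c j \<le> sq c k"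
  by (simp add: sq_def)

lemma hint_summable:
  fixes F g :: "real \<Rightarrow> real" and a :: "nat \<Rightarrow> real"
  assumes c: "0 < c"
    and Fm: "\<And>x y. x \<le> y \<Longrightarrow> F x \<le> F y" and Fr: "\<And>a. continuous (at_right a) F"
    and H: "(\<integral>\<^sup>+ S. indicator {c..} S * ennreal (g S) \<partial>(interval_measure F)) < \<infinity>"
    and a0: "\<And>k. 0 \<le> a k"
    and ag: "\<And>k S. S \<in> {sq c k<..sq c (Suc k)} \<Longrightarrow> a k \<le> g S"
  shows "summable (\<lambda>k. (F (sq c (Suc k)) - F (sq c k)) * a k)"
proof (rule summableI_nonneg_bounded)
  let ?H = "(\<integral>\<^sup>+ S. indicator {c..} S * ennreal (g S) \<partial>(interval_measure F))"
  let ?I = "\<lambda>k. {sq c k<..sq c (Suc k)}"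
  fix n
  show "0 \<le> (F (sq c (Suc n)) - F (sq c n)) * a n"
    using Fm[OF sq_mono[OF c, of n "Suc n"]] a0[of n] by simp
  have pw: "(\<Sum>k<N. ennreal (a k) * indicator (?I k) S) \<le> indicator {c..} S * ennreal (g S)" for N S
  proof (cases "\<exists>j. S \<in> ?I j")
    case False
    then have "(\<Sum>k<N. ennreal (a k) * indicator (?I k) S) = 0"
    proof (intro sum.neutral ballI)
      fix k assume "k \<in> {..<N}"
      have "S \<notin> ?I k" using False by blast
      then show "ennreal (a k) * indicator (?I k) S = 0" by simp
    qed
    then show ?thesis by simp
  next
    case True
    then obtain j where j: "S \<in> ?I j" by blast
    have uniq: "S \<in> ?I k \<Longrightarrow> k = j" for k
    proof (rule ccontr)
      assume k: "S \<in> ?I k" "k \<noteq> j"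
      show False
      proof (cases "k < j")
        case True
        then have "sq c (Suc k) \<le> sq c j" by (intro sq_mono[OF c]) auto
        then show False using j k by auto
      next
        case False
        then have "sq c (Suc j) \<le> sq c k" using k by (intro sq_mono[OF c]) auto
        then show False using j k by auto
      qed
    qed
    have "(\<Sum>k<N. ennreal (a k) * indicator (?I k) S) = (\<Sum>k<N. if k = j then ennreal (a j) else 0)"
    proof (rule sum.cong[OF refl])
      fix k
      show "ennreal (a k) * indicator (?I k) S = (if k = j then ennreal (a j) else 0)"
      proof (cases "k = j")
        case True then show ?thesis using j by simp
      next
        case False then have "S \<notin> ?I k" using uniq by blast
        then show ?thesis using False by simp
      qed
    qed
    also have "\<dots> \<le> ennreal (a j)" by simp
    also have "\<dots> \<le> ennreal (g S)" using ag[OF j] by (rule ennreal_leI)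
    also have "\<dots> = indicator {c..} S * ennreal (g S)"
      using j sq_ge[OF c, of j] by (auto simp: indicator_def)
    finally show ?thesis .
  qed
  have "ennreal (\<Sum>k<n. (F (sq c (Suc k)) - F (sq c k)) * a k)
      = (\<Sum>k<n. ennreal (a k) * emeasure (interval_measure F) (?I k))"
  proof -
    have "ennreal (\<Sum>k<n. (F (sq c (Suc k)) - F (sq c k)) * a k)
        = (\<Sum>k<n. ennreal ((F (sq c (Suc k)) - F (sq c k)) * a k))"
      by (rule sum_ennreal[symmetric])
         (use Fm sq_mono[OF c] a0 in \<open>auto intro!: mult_nonneg_nonneg\<close>)
    also have "\<dots> = (\<Sum>k<n. ennreal (a k) * emeasure (interval_measure F) (?I k))"
    proof (rule sum.cong[OF refl])
      fix k
      have "sq c k \<le> sq c (Suc k)" by (rule sq_mono[OF c]) auto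
      then have "emeasure (interval_measure F) (?I k) = ennreal (F (sq c (Suc k)) - F (sq c k))"
        by (rule emeasure_interval_measure_Ioc[OF _ Fm Fr])
      then show "ennreal ((F (sq c (Suc k)) - F (sq c k)) * a k) = ennreal (a k) * emeasure (interval_measure F) (?I k)"
        using a0[of k] by (simp add: ennreal_mult' mult.commute)
    qed
    finally show ?thesis .
  qed
  also have "\<dots> = (\<integral>\<^sup>+ S. (\<Sum>k<n. ennreal (a k) * indicator (?I k) S) \<partial>interval_measure F)"
    by (subst nn_integral_sum) (auto simp: nn_integral_cmult_indicator)
  also have "\<dots> \<le> ?H"
    by (rule nn_integral_mono) (rule pw)
  finally have le: "ennreal (\<Sum>k<n. (F (sq c (Suc k)) - F (sq c k)) * a k) \<le> ?H" .
  show "(\<Sum>k<n. (F (sq c (Suc k)) - F (sq c k)) * a k) \<le> enn2real ?H"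
  proof -
    have Ht: "?H < top" using H by simp
    have "0 \<le> (\<Sum>k<n. (F (sq c (Suc k)) - F (sq c k)) * a k)"
      by (intro sum_nonneg mult_nonneg_nonneg) (use Fm sq_mono[OF c] a0 in auto)
    then show ?thesis using enn2real_mono[OF le Ht] by simp
  qed
qed



lemma ereal_pos_fin:
  assumes "0 < P" "P < \<infinity>" shows "0 < real_of_ereal P" "P = ereal (real_of_ereal P)"
  using assms by (cases P; simp)+

theorem corollary2p4p4:
  fixes p c :: real and f :: "real \<Rightarrow> real"
  assumes hp: "1 \<le> p" and hc: "0 < c"
    and hprof: "\<And>S. c \<le> S \<Longrightarrow> 0 < profile TYPE('a::metric_space) p S \<and> profile TYPE('a) p S < \<infinity>"
    and hfmono: "mono_on {c..} f"
    and hfnn: "\<And>S. c \<le> S \<Longrightarrow> 0 \<le> f S"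
    and hint: "(\<integral>\<^sup>+ S. indicator {c..} S * ennreal (real_of_ereal (profile TYPE('a) p S) powr p)
                 \<partial>(interval_measure (LS_fun f p c))) < \<infinity>"
  shows "\<exists>(\<mu> :: real measure) (\<theta> :: 'a \<Rightarrow> real \<Rightarrow> 'a \<Rightarrow> real) (\<rho> :: real \<Rightarrow> real).
           sets \<mu> = sets (restrict_space borel {c..}) \<and>
           (\<forall>x. Lp_lp \<mu> p (\<theta> x)) \<and>
           (\<exists>L. \<forall>x y. Lp_lp_norm \<mu> p (\<lambda>t. \<theta> x t - \<theta> y t) \<le> L * dist x y) \<and>
           mono_on {0..} \<rho> \<and> succeq_fun \<rho> f \<and>
           (\<forall>x y. \<rho> (dist x y) \<le> Lp_lp_norm \<mu> p (\<lambda>t. \<theta> x t - \<theta> y t))"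
proof -
  have p0: "0 < p" using hp by simp
  define F where "F = LS_fun f p c"
  have Fm: "\<And>x y. x \<le> y \<Longrightarrow> F x \<le> F y" unfolding F_def by (rule LS_mono)
  have F0: "\<And>t. 0 \<le> F t" unfolding F_def by (rule LS_nonneg)
  define ep where "ep k = real_of_ereal (profile TYPE('a) p (sq c k))" for k
  have ep: "0 < ep k" "profile TYPE('a) p (sq c k) = ereal (ep k)" for k
    using ereal_pos_fin[of "profile TYPE('a) p (sq c k)"] hprof[OF sq_ge[OF hc, of k]]
    unfolding ep_def by auto
  have "\<exists>\<xi>::'a \<Rightarrow> 'a \<Rightarrow> real. (\<forall>x. lp_member p (\<xi> x) \<and> lp_norm p (\<xi> x) = 1) \<and> prop_size \<xi> \<le> ereal (sq c k)
          \<and> eps_map p \<xi> < ereal (2 * ep k)" for k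
  proof -
    have "profile TYPE('a) p (sq c k) < ereal (2 * ep k)" using ep[of k] by simp
    then show ?thesis unfolding profile_def by (subst (asm) INF_less_iff) blast
  qed
  then obtain Xi :: "nat \<Rightarrow> 'a \<Rightarrow> 'a \<Rightarrow> real" where Xi:
    "\<And>k. (\<forall>x. lp_member p (Xi k x) \<and> lp_norm p (Xi k x) = 1) \<and> prop_size (Xi k) \<le> ereal (sq c k)
          \<and> eps_map p (Xi k) < ereal (2 * ep k)"
    by metis
  have epsge: "profile TYPE('a) p (sq c k) \<le> eps_map p (Xi k)" for k
    unfolding profile_def by (rule INF_lower) (use Xi[of k] in auto)
  define e where "e k = real_of_ereal (eps_map p (Xi k))" for k
  have e: "eps_map p (Xi k) = ereal (e k)" "ep k \<le> e k" "e k < 2 * ep k" "0 < e k" for k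
  proof -
    have a: "ereal (ep k) \<le> eps_map p (Xi k)" "eps_map p (Xi k) < ereal (2 * ep k)"
      using epsge[of k] Xi[of k] ep[of k] by auto
    then show "eps_map p (Xi k) = ereal (e k)" "ep k \<le> e k" "e k < 2 * ep k" "0 < e k"
      unfolding e_def using ep(1)[of k] by (cases "eps_map p (Xi k)"; auto)+
  qed
  have Xmem: "lp_member p (Xi k x)" "lp_norm p (Xi k x) = 1" for k x using Xi[of k] by auto
  have upper: "lp_norm p (Xi k x - Xi k y) \<le> e k * dist x y" for k x y
  proof (cases "x = y")
    case True
    then show ?thesis by (simp add: lp_norm_def)
  next
    case False
    have "ereal (lp_norm p (Xi k x - Xi k y) / dist x y) \<le> eps_map p (Xi k)"
      unfolding eps_map_def by (rule SUP_upper2[of "(x,y)"]) (use False in auto)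
    then have "lp_norm p (Xi k x - Xi k y) / dist x y \<le> e k" using e(1)[of k] by simp
    then show ?thesis using False by (simp add: divide_le_eq)
  qed
  have supp: "dist x z \<le> sq c k" if "Xi k x z \<noteq> 0" for k x z
  proof -
    have "ereal (dist x z) \<le> prop_size (Xi k)"
      unfolding prop_size_def by (rule SUP_upper2[of "(x,z)"]) (use that in auto)
    then show ?thesis using Xi[of k] by (meson ereal_less_eq(3) order_trans)
  qed
  have lower: "lp_norm p (Xi k x - Xi k y) powr p = 2" if "2 * sq c k < dist x y" for k x y
  proof (rule lp_norm_disjoint[OF p0 Xmem(1) Xmem(1) Xmem(2) Xmem(2)])
    fix z
    show "Xi k x z = 0 \<or> Xi k y z = 0"
    proof (rule ccontr)
      assume "\<not> ?thesis"
      then have "dist x z \<le> sq c k" "dist y z \<le> sq c k" using supp by auto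
      then have "dist x y \<le> 2 * sq c k" using dist_triangle[of x y z] by (simp add: dist_commute)
      then show False using that by simp
    qed
  qed
  define m where "m k = (case k of 0 \<Rightarrow> F (sq c 0)
     | Suc j \<Rightarrow> (F (sq c (Suc j)) - F (sq c j)) * (ep (Suc j) / e (Suc j)) powr p)" for k
  have dF': "F (sq c j) \<le> F (sq c (Suc j))" for j
    using Fm[OF sq_mono[OF hc, of j "Suc j"]] by simp
  have dF: "0 \<le> F (sq c (Suc j)) - F (sq c j)" for j
    using dF'[of j] by simp
  have m0: "0 \<le> m k" for k
    by (cases k) (auto simp: m_def F0 dF' intro!: mult_nonneg_nonneg)
  have mS: "m (Suc j) * e (Suc j) powr p = (F (sq c (Suc j)) - F (sq c j)) * ep (Suc j) powr p" for j
    using e(4)[of "Suc j"] ep(1)[of "Suc j"] by (simp add: m_def powr_divide)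
  have msum: "summable (\<lambda>k. m k * e k powr p)"
  proof -
    have "summable (\<lambda>j. (F (sq c (Suc j)) - F (sq c j)) * ep (Suc j) powr p)"
    proof (rule hint_summable[OF hc Fm _ hint[folded F_def]])
      show "\<And>a. continuous (at_right a) F" unfolding F_def by (rule LS_rcont)
      show "\<And>k. 0 \<le> ep (Suc k) powr p" by simp
      fix k S assume S: "S \<in> {sq c k<..sq c (Suc k)}"
      then have cS: "c \<le> S" using sq_ge[OF hc, of k] by auto
      have "profile TYPE('a) p (sq c (Suc k)) \<le> profile TYPE('a) p S"
        by (rule profile_antimono) (use S in auto)
      then have "ep (Suc k) \<le> real_of_ereal (profile TYPE('a) p S)"
        using ep[of "Suc k"] ereal_pos_fin[of "profile TYPE('a) p S"] hprof[OF cS]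
        by (metis ereal_less_eq(3))
      then show "ep (Suc k) powr p \<le> real_of_ereal (profile TYPE('a) p S) powr p"
        using ep(1)[of "Suc k"] p0 by (intro powr_mono2) auto
    qed
    then have "summable (\<lambda>j. m (Suc j) * e (Suc j) powr p)" by (simp add: mS)
    then show ?thesis by (subst (asm) summable_Suc_iff)
  qed
  define Ms where "Ms = (\<Sum>k. m k * e k powr p)"
  have Ms0: "0 \<le> Ms" unfolding Ms_def by (intro suminf_nonneg msum) (simp add: m0)
  define x0 :: 'a where "x0 = undefined"
  define \<theta> :: "'a \<Rightarrow> real \<Rightarrow> 'a \<Rightarrow> real" where
    "\<theta> x t = (if t \<in> range (sq c) then Xi (inv (sq c) t) x - Xi (inv (sq c) t) x0 else (\<lambda>_. 0))" for x t
  have th_sq: "\<theta> x (sq c k) = Xi k x - Xi k x0" for x k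
    unfolding \<theta>_def using sq_inj[OF hc] by simp
  have th_off: "t \<notin> range (sq c) \<Longrightarrow> \<theta> x t = (\<lambda>_. 0)" for x t
    unfolding \<theta>_def by simp
  have th_diff: "\<theta> x (sq c k) - \<theta> y (sq c k) = Xi k x - Xi k y" for x y k
    by (simp add: th_sq fun_diff_def)
  define \<mu> where "\<mu> = mu c m"
  define I where "I x y = (\<integral>\<^sup>+ t. ennreal (lp_norm p (\<theta> x t - \<theta> y t) powr p) \<partial>\<mu>)" for x y
  have Ieq: "I x y = (\<Sum>k. ennreal (m k * lp_norm p (Xi k x - Xi k y) powr p))" for x y
  proof -
    have "I x y = (\<Sum>k. ennreal (m k) * ennreal (lp_norm p (\<theta> x (sq c k) - \<theta> y (sq c k)) powr p))"
      unfolding I_def \<mu>_def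
      by (rule nn_integral_mu[OF hc]) (simp add: th_off lp_norm_def)
    also have "\<dots> = (\<Sum>k. ennreal (m k * lp_norm p (Xi k x - Xi k y) powr p))"
      by (simp add: th_diff ennreal_mult m0)
    finally show ?thesis .
  qed
  have Iup: "I x y \<le> ennreal (dist x y powr p * Ms)" for x y
  proof -
    have "I x y \<le> (\<Sum>k. ennreal (m k * e k powr p * dist x y powr p))"
      unfolding Ieq
    proof (intro suminf_le summableI ennreal_leI)
      fix k
      have "lp_norm p (Xi k x - Xi k y) powr p \<le> (e k * dist x y) powr p"
        using upper[of k x y] p0 by (intro powr_mono2) (auto simp: lp_norm_nonneg)
      also have "\<dots> = e k powr p * dist x y powr p"
        using e(4)[of k] by (simp add: powr_mult)
      finally show "m k * lp_norm p (Xi k x - Xi k y) powr p \<le> m k * e k powr p * dist x y powr p"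
        using m0[of k] by (simp add: mult_left_mono mult.assoc)
    qed
    also have "\<dots> = ennreal (\<Sum>k. m k * e k powr p * dist x y powr p)"
      by (rule suminf_ennreal2) (auto intro: summable_mult2 msum simp: m0)
    also have "(\<Sum>k. m k * e k powr p * dist x y powr p) = dist x y powr p * Ms"
      unfolding Ms_def using suminf_mult2[OF msum, of "dist x y powr p"] by (simp add: mult.commute)
    finally show ?thesis .
  qed
  have Ifin: "I x y < \<infinity>" for x y
    using Iup[of x y] ennreal_less_top[of "dist x y powr p * Ms"] by (simp add: le_less_trans)
  have th0: "\<theta> x0 t = (\<lambda>_. 0)" for t
    unfolding \<theta>_def by (auto simp: fun_diff_def)
  have thx: "\<theta> x t - \<theta> x0 t = \<theta> x t" for x t
    by (simp add: th0 fun_diff_def)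
  have thmem: "lp_member p (\<theta> x t)" for x t
    unfolding \<theta>_def using lp_member_diff[OF p0 Xmem(1) Xmem(1)] lp_member_zero by auto
  have space\<mu>: "space \<mu> = {c..}" unfolding \<mu>_def by (rule space_mu)
  have sets\<mu>: "sets \<mu> = sets (restrict_space borel {c..})" unfolding \<mu>_def by (rule sets_mu)
  have Lp: "Lp_lp \<mu> p (\<theta> x)" for x
  proof -
    define sn where "sn n t = (if t \<in> sq c ` {..n} then \<theta> x t else (\<lambda>_. 0))" for n t
    have simple: "lp_simple \<mu> p (sn n)" for n
      unfolding lp_simple_def
    proof (intro conjI ballI)
      have "sn n ` space \<mu> \<subseteq> insert (\<lambda>_. 0) ((\<lambda>k. \<theta> x (sq c k)) ` {..n})"
        unfolding sn_def by auto
      then show "finite (sn n ` space \<mu>)" by (rule finite_subset) auto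
      fix t show "lp_member p (sn n t)" unfolding sn_def using thmem lp_member_zero by auto
    next
      fix v
      have "sn n \<in> measurable (restrict_space borel {c..}) (count_space UNIV)"
        by (rule disc_meas[OF hc, of "\<lambda>_. 0"]) (auto simp: sn_def)
      then have "sn n -` {v} \<inter> space (restrict_space borel {c..}) \<in> sets (restrict_space borel {c..})"
        by (rule measurable_sets) simp
      then show "sn n -` {v} \<inter> space \<mu> \<in> sets \<mu>"
        using sets\<mu> space\<mu> by (simp add: space_restrict_space)
    qed
    have conv: "(\<lambda>n. lp_norm p (sn n t - \<theta> x t)) \<longlonglongrightarrow> 0" for t
    proof (cases "t \<in> range (sq c)")
      case True
      then obtain k where k: "t = sq c k" by auto
      have "eventually (\<lambda>n. lp_norm p (sn n t - \<theta> x t) = 0) sequentially"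
        using eventually_ge_at_top[of k]
      proof (rule eventually_mono)
        fix n assume "k \<le> n"
        then have "sn n t = \<theta> x t" unfolding sn_def k by auto
        then show "lp_norm p (sn n t - \<theta> x t) = 0" by (simp add: lp_norm_def)
      qed
      then show ?thesis by (rule tendsto_eventually)
    next
      case False
      then have "sn n t - \<theta> x t = (\<lambda>_. 0)" for n
        unfolding sn_def using th_off[OF False] by (auto simp: fun_diff_def)
      then show ?thesis by (simp add: lp_norm_def)
    qed
    have sm: "lp_strongly_measurable \<mu> p (\<theta> x)"
      unfolding lp_strongly_measurable_def
      using thmem simple conv by (intro conjI exI[of _ sn]) auto
    have "(\<integral>\<^sup>+ t. ennreal (lp_norm p (\<theta> x t) powr p) \<partial>\<mu>) = I x x0"
      unfolding I_def by (simp add: thx)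
    then show ?thesis unfolding Lp_lp_def using sm Ifin by simp
  qed
  have LpN: "Lp_lp_norm \<mu> p (\<lambda>t. \<theta> x t - \<theta> y t) = enn2real (I x y) powr (1/p)" for x y
    unfolding Lp_lp_norm_def I_def by simp
  have Lip: "Lp_lp_norm \<mu> p (\<lambda>t. \<theta> x t - \<theta> y t) \<le> Ms powr (1/p) * dist x y" for x y
  proof -
    have "enn2real (I x y) \<le> dist x y powr p * Ms"
      using enn2real_mono[OF Iup[of x y]] Ms0 by simp
    then have "enn2real (I x y) powr (1/p) \<le> (dist x y powr p * Ms) powr (1/p)"
      using p0 by (intro powr_mono2) auto
    also have "\<dots> = Ms powr (1/p) * dist x y"
      using p0 Ms0 by (simp add: powr_mult powr_powr)
    finally show ?thesis by (simp add: LpN)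
  qed
  define K where "K t = {k. 2 * sq c k < t}" for t
  have Kfin: "finite (K t)" for t
  proof (rule finite_subset)
    show "K t \<subseteq> {..nat \<lceil>t / c\<rceil>}"
    proof
      fix k assume "k \<in> K t"
      then have "2 * (c * real (Suc k)) < t" by (simp add: K_def sq_def)
      moreover have "0 \<le> c * real (Suc k)" using hc by simp
      ultimately have "c * real (Suc k) < t" by linarith
      then have "real (Suc k) < t / c" using hc by (simp add: field_simps)
      then have "real k < t / c" by simp
      then have "real k \<le> real_of_int \<lceil>t / c\<rceil>" by linarith
      then have "int k \<le> \<lceil>t / c\<rceil>" by (metis of_int_le_iff of_int_of_nat_eq)
      then show "k \<in> {..nat \<lceil>t / c\<rceil>}" by (simp add: le_nat_iff)
    qed
  qed simp
  define \<rho> where "\<rho> t = (\<Sum>k\<in>K t. 2 * m k) powr (1/p)" for t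
  have \<rho>mono: "mono_on {0..} \<rho>"
  proof (rule mono_onI)
    fix r t :: real assume "r \<le> t"
    then have "K r \<subseteq> K t" by (auto simp: K_def)
    then have "(\<Sum>k\<in>K r. 2 * m k) \<le> (\<Sum>k\<in>K t. 2 * m k)"
      by (intro sum_mono2 Kfin) (auto simp: m0)
    then show "\<rho> r \<le> \<rho> t" unfolding \<rho>_def using p0
      by (intro powr_mono2) (auto intro!: sum_nonneg simp: m0)
  qed
  have \<rho>low: "\<rho> (dist x y) \<le> Lp_lp_norm \<mu> p (\<lambda>t. \<theta> x t - \<theta> y t)" for x y
  proof -
    have "ennreal (\<Sum>k\<in>K (dist x y). 2 * m k)
        = (\<Sum>k\<in>K (dist x y). ennreal (m k * lp_norm p (Xi k x - Xi k y) powr p))"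
    proof -
      have "(\<Sum>k\<in>K (dist x y). 2 * m k) = (\<Sum>k\<in>K (dist x y). m k * lp_norm p (Xi k x - Xi k y) powr p)"
        by (rule sum.cong[OF refl]) (simp add: K_def lower)
      moreover have "(\<Sum>k\<in>K (dist x y). ennreal (m k * lp_norm p (Xi k x - Xi k y) powr p))
          = ennreal (\<Sum>k\<in>K (dist x y). m k * lp_norm p (Xi k x - Xi k y) powr p)"
        by (rule sum_ennreal) (intro mult_nonneg_nonneg m0 powr_ge_zero)
      ultimately show ?thesis by simp
    qed
    also have "\<dots> \<le> I x y" unfolding Ieq
      by (rule sum_le_suminf[OF summableI Kfin]) simp
    finally have "ennreal (\<Sum>k\<in>K (dist x y). 2 * m k) \<le> I x y" .
    then have "enn2real (ennreal (\<Sum>k\<in>K (dist x y). 2 * m k)) \<le> enn2real (I x y)"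
      by (rule enn2real_mono) (use Ifin[of x y] in simp)
    moreover have "0 \<le> (\<Sum>k\<in>K (dist x y). 2 * m k)" by (intro sum_nonneg) (simp add: m0)
    ultimately have "(\<Sum>k\<in>K (dist x y). 2 * m k) \<le> enn2real (I x y)" by simp
    then show ?thesis unfolding LpN \<rho>_def using p0
      by (intro powr_mono2) (auto intro!: sum_nonneg simp: m0)
  qed
  have \<rho>succ: "succeq_fun \<rho> f"
    unfolding succeq_fun_def
  proof (intro exI conjI)
    define C where "C = (2 powr (1-p)) powr (1/p)"
    show "0 < C" unfolding C_def by simp
    show "0 < (1/8::real)" by simp
    show "eventually (\<lambda>t. C * f ((1/8) * t) \<le> \<rho> t) at_top"
      unfolding eventually_at_top_linorder
    proof (intro exI[of _ "8*c"] allI impI)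
      fix t assume t: "8*c \<le> t"
      define n where "n = nat \<lfloor>t/(4*c)\<rfloor>"
      have q: "2 \<le> t/(4*c)" using t hc by (simp add: field_simps)
      have n1: "real n \<le> t/(4*c)" "t/(4*c) < real n + 1" "2 \<le> n"
        unfolding n_def using q by linarith+
      define Kn where "Kn = n - 1"
      have sqK: "sq c Kn = c * real n" unfolding Kn_def sq_def using n1(3)
        by (simp add: Suc_diff_1 del: of_nat_Suc)
      have cn1: "c * real n \<le> t/4" using n1(1) hc by (simp add: field_simps)
      have cn2: "t/8 \<le> c * real n"
      proof -
        have "t/(4*c) - 1 < real n" using n1(2) by linarith
        then have "t/4 - c < c * real n" using hc by (simp add: field_simps)
        then show ?thesis using t by linarith
      qed
      have sub: "{..Kn} \<subseteq> K t"
      proof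
        fix k assume "k \<in> {..Kn}"
        then have "sq c k \<le> sq c Kn" by (intro sq_mono[OF hc]) auto
        then show "k \<in> K t" unfolding K_def using sqK cn1 t hc by auto
      qed
      have pw: "2 powr (1-p) * (F (sq c (Suc j)) - F (sq c j)) \<le> 2 * m (Suc j)" for j
      proof -
        have h: "1/2 \<le> ep (Suc j) / e (Suc j)"
          using e(3,4)[of "Suc j"] by (simp add: field_simps)
        have "1 / 2 powr p = (1/2) powr p" by (simp add: powr_divide)
        also have "\<dots> \<le> (ep (Suc j) / e (Suc j)) powr p"
          using h p0 by (intro powr_mono2) auto
        finally have "2 * (1 / 2 powr p) \<le> 2 * (ep (Suc j) / e (Suc j)) powr p" by simp
        then have "2 powr (1-p) \<le> 2 * (ep (Suc j) / e (Suc j)) powr p"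
          by (simp add: powr_diff)
        then have "2 powr (1-p) * (F (sq c (Suc j)) - F (sq c j))
            \<le> (2 * (ep (Suc j) / e (Suc j)) powr p) * (F (sq c (Suc j)) - F (sq c j))"
          using dF[of j] by (rule mult_right_mono)
        moreover have "2 * m (Suc j) = (2 * (ep (Suc j) / e (Suc j)) powr p) * (F (sq c (Suc j)) - F (sq c j))"
          by (simp add: m_def)
        ultimately show ?thesis by simp
      qed
      have le1: "2 powr (1-p) \<le> 1"
        using powr_mono[of "1-p" 0 2] hp by simp
      have "2 powr (1-p) * F (sq c Kn) = 2 powr (1-p) * F (sq c 0) + 2 powr (1-p) * (\<Sum>j<Kn. F (sq c (Suc j)) - F (sq c j))"
        by (simp add: sum_lessThan_telescope[of "\<lambda>j. F (sq c j)"] algebra_simps)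
      also have "\<dots> \<le> 2 * m 0 + (\<Sum>j<Kn. 2 * m (Suc j))"
      proof (rule add_mono)
        show "2 powr (1-p) * F (sq c 0) \<le> 2 * m 0"
        proof -
          have "2 powr (1-p) * F (sq c 0) \<le> 2 * F (sq c 0)"
            using le1 F0[of "sq c 0"] by (intro mult_right_mono) auto
          then show ?thesis by (simp add: m_def)
        qed
        show "2 powr (1-p) * (\<Sum>j<Kn. F (sq c (Suc j)) - F (sq c j)) \<le> (\<Sum>j<Kn. 2 * m (Suc j))"
          by (simp add: sum_distrib_left pw sum_mono)
      qed
      also have "\<dots> = (\<Sum>k\<le>Kn. 2 * m k)" by (simp add: sum.atMost_shift)
      also have "\<dots> \<le> (\<Sum>k\<in>K t. 2 * m k)"
        by (rule sum_mono2[OF Kfin sub]) (simp add: m0)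
      finally have S1: "2 powr (1-p) * F (sq c Kn) \<le> (\<Sum>k\<in>K t. 2 * m k)" .
      have c8: "c \<le> t/8" using t by simp
      have "f (t/8) \<le> f (sq c Kn)"
        using hfmono c8 cn2 sqK by (auto simp: mono_on_def)
      then have "f (t/8) powr p \<le> f (sq c Kn) powr p"
        using hfnn[OF c8] p0 by (intro powr_mono2) auto
      also have "\<dots> \<le> F (sq c Kn)" unfolding F_def
        by (rule LS_ge[OF hfmono hfnn sq_ge[OF hc] p0])
      finally have "2 powr (1-p) * f (t/8) powr p \<le> (\<Sum>k\<in>K t. 2 * m k)"
        using S1 by (meson mult_left_mono order_trans powr_ge_zero)
      then have "(2 powr (1-p) * f (t/8) powr p) powr (1/p) \<le> \<rho> t"
        unfolding \<rho>_def using p0 by (intro powr_mono2) auto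
      moreover have "(2 powr (1-p) * f (t/8) powr p) powr (1/p) = C * f (t/8)"
        unfolding C_def using p0 hfnn[OF c8] by (simp add: powr_mult powr_powr)
      ultimately show "C * f ((1/8) * t) \<le> \<rho> t" by simp
    qed
  qed
  show ?thesis
    by (intro exI[of _ \<mu>] exI[of _ \<theta>] exI[of _ \<rho>] conjI sets\<mu> allI Lp \<rho>mono \<rho>succ \<rho>low
        exI[of _ "Ms powr (1/p)"] Lip)
qed

end
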